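(* Let $Q$ be a $*$-left Ehresmann monoid with semilattice of projections $E$ and proper basis $H$, and let $T=Q/\sigma$, writing $[m]$ for the $\sigma$-class of $m$. For $[m]\in T$ and $e\in E$ declare $[m]\cdot e$ defined iff there is $h\in H$ with $h\,\sigma\,m$ and $h^*\ge e$, and then set $[m]\cdot e=(he)^+$. Then: (a) if $h,k\in H$, $e\in E$, $h\,\sigma\,k$ and $h^*,k^*\ge e$, then $he=ke$, so $[m]\cdot e$ is well defined; (b) $(E,\cdot)$ is a strong, order-preserving partial action of $T$ on the semilattice $E$; (c) for every $[t]\in T$ there is $e\in E$ such that $[t]\cdot e$ is defined.
   Context: A $*$-left Ehresmann monoid is a monoid $M$ with unary operations $+,*$ satisfying $x^+x=x$, $(x^+y^+)^+=x^+y^+$, $x^+y^+=y^+x^+$, $(xy)^+=(xy^+)^+$, $xx^*=x$, $(x^* )^*=x^*$, $x^*y^*=y^*x^*$, $(xy^* )^*y^*=(xy^* )^*$, $(x^* )^+=x^*$, $(x^+)^*=x^+$; $E=\{a^+\}=\{a^*\}$, ordered by $e\le f$ iff $ef=e$; $\sigma$ is the least monoid congruence containing $E\times E$. $H\subseteq M$ is atomic if: (H1) $E\subseteq H$; (H2) $h\in H,e\in E$ imply $he\in H$ and $(he)^*=h^*e$; (H3) if $h\in H$, $k\in H\setminus E$, $h^*\ge k^+$ then $hk\in H$ and $(hk)^*=k^*$; (H4) every $m$ is $\sigma$-related to some $h\in H$; (H5) if $h,k,w\in H$, $hk\,\sigma\,w$, $k^*=w^*$, then some $u\in H$ has $u\,\sigma\,h$,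 $u^*\ge k^+$. $H$ is proper if ($h^*=k^*$ and $h\,\sigma\,k$) iff $h=k$. $h_1\cdots h_n$ is in $H$-canonical form if $h_i^*<h_{i+1}^+$ ($1\le i<n$) and $h_i\notin E$ ($2\le i\le n$); $M$ has $H$-canonical forms if each element has exactly one such expression. A proper basis is a proper atomic generating set $H$ (as a semigroup) for which $M$ has $H$-canonical forms. A partial action of a monoid $T$ on a set $X$ is a partial map $(t,x)\mapsto t\cdot x$ with $1\cdot x=x$ always defined, and $t\cdot x$, $s\cdot(t\cdot x)$ defined implying $st\cdot x$ defined and equal to $s\cdot(t\cdot x)$; it is strong if $t\cdot x$ and $st\cdot x$ defined imply $s\cdot(t\cdot x)$ defined; order-preserving if $x\le y$ and $t\cdot y$ defined imply $t\cdot x$ defined and $t\cdot x\le t\cdot y$. *)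

theory Defs
  imports Main
begin

text \<open>A *-left Ehresmann monoid whose underlying set is the whole type 'a,
  with multiplication m, identity one, and unary operations pl (plus) and st (star).\<close>

definition star_left_ehresmann ::
  "('a \<Rightarrow> 'a \<Rightarrow> 'a) \<Rightarrow> 'a \<Rightarrow> ('a \<Rightarrow> 'a) \<Rightarrow> ('a \<Rightarrow> 'a) \<Rightarrow> bool" where
  "star_left_ehresmann m one pl st \<longleftrightarrow>
     (\<forall>x y z. m (m x y) z = m x (m y z)) \<and>
     (\<forall>x. m one x = x \<and> m x one = x) \<and>
     (\<forall>x. m (pl x) x = x) \<and>
     (\<forall>x y. pl (m (pl x) (pl y)) = m (pl x) (pl y)) \<and>
     (\<forall>x y. m (pl x) (pl y) = m (pl y) (pl x)) \<and>
     (\<forall>x y. pl (m x y) = pl (m x (pl y))) \<and>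
     (\<forall>x. m x (st x) = x) \<and>
     (\<forall>x. st (st x) = st x) \<and>
     (\<forall>x y. m (st x) (st y) = m (st y) (st x)) \<and>
     (\<forall>x y. m (st (m x (st y))) (st y) = st (m x (st y))) \<and>
     (\<forall>x. pl (st x) = st x) \<and>
     (\<forall>x. st (pl x) = pl x)"

definition projs :: "('a \<Rightarrow> 'a) \<Rightarrow> 'a set" where
  "projs pl = range pl"

definition ple :: "('a \<Rightarrow> 'a \<Rightarrow> 'a) \<Rightarrow> 'a \<Rightarrow> 'a \<Rightarrow> bool" where
  "ple m e f \<longleftrightarrow> m e f = e"

definition monoid_congruence :: "('a \<Rightarrow> 'a \<Rightarrow> 'a) \<Rightarrow> ('a \<times> 'a) set \<Rightarrow> bool" where
  "monoid_congruence m R \<longleftrightarrow> equiv UNIV R \<and>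
     (\<forall>a b c d. (a, b) \<in> R \<longrightarrow> (c, d) \<in> R \<longrightarrow> (m a c, m b d) \<in> R)"

definition sigma :: "('a \<Rightarrow> 'a \<Rightarrow> 'a) \<Rightarrow> ('a \<Rightarrow> 'a) \<Rightarrow> ('a \<times> 'a) set" where
  "sigma m pl = \<Inter> {R. monoid_congruence m R \<and> projs pl \<times> projs pl \<subseteq> R}"

text \<open>Atomic subsets (H1)-(H5).\<close>
definition atomic ::
  "('a \<Rightarrow> 'a \<Rightarrow> 'a) \<Rightarrow> ('a \<Rightarrow> 'a) \<Rightarrow> ('a \<Rightarrow> 'a) \<Rightarrow> 'a set \<Rightarrow> bool" where
  "atomic m pl st H \<longleftrightarrow>
     projs pl \<subseteq> H \<and>
     (\<forall>h\<in>H. \<forall>e\<in>projs pl. m h e \<in> H \<and> st (m h e) = m (st h) e) \<and>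
     (\<forall>h\<in>H. \<forall>k\<in>H - projs pl. ple m (pl k) (st h) \<longrightarrow>
         m h k \<in> H \<and> st (m h k) = st k) \<and>
     (\<forall>x. \<exists>h\<in>H. (x, h) \<in> sigma m pl) \<and>
     (\<forall>h\<in>H. \<forall>k\<in>H. \<forall>w\<in>H. (m h k, w) \<in> sigma m pl \<and> st k = st w \<longrightarrow>
         (\<exists>u\<in>H. (u, h) \<in> sigma m pl \<and> ple m (pl k) (st u)))"

definition proper :: "('a \<Rightarrow> 'a \<Rightarrow> 'a) \<Rightarrow> ('a \<Rightarrow> 'a) \<Rightarrow> ('a \<Rightarrow> 'a) \<Rightarrow> 'a set \<Rightarrow> bool" where
  "proper m pl st H \<longleftrightarrow>
     (\<forall>h\<in>H. \<forall>k\<in>H. (st h = st k \<and> (h, k) \<in> sigma m pl) \<longleftrightarrow> h = k)"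

fun lprod :: "('a \<Rightarrow> 'a \<Rightarrow> 'a) \<Rightarrow> 'a list \<Rightarrow> 'a" where
  "lprod m [] = undefined"
| "lprod m [x] = x"
| "lprod m (x # y # ys) = m x (lprod m (y # ys))"

definition canonical_form ::
  "('a \<Rightarrow> 'a \<Rightarrow> 'a) \<Rightarrow> ('a \<Rightarrow> 'a) \<Rightarrow> ('a \<Rightarrow> 'a) \<Rightarrow> 'a set \<Rightarrow> 'a list \<Rightarrow> bool" where
  "canonical_form m pl st H hs \<longleftrightarrow> hs \<noteq> [] \<and> set hs \<subseteq> H \<and>
     (\<forall>i. Suc i < length hs \<longrightarrow>
        ple m (st (hs ! i)) (pl (hs ! Suc i)) \<and> st (hs ! i) \<noteq> pl (hs ! Suc i)) \<and>
     (\<forall>i. 0 < i \<and> i < length hs \<longrightarrow> hs ! i \<notin> projs pl)"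

definition proper_basis ::
  "('a \<Rightarrow> 'a \<Rightarrow> 'a) \<Rightarrow> ('a \<Rightarrow> 'a) \<Rightarrow> ('a \<Rightarrow> 'a) \<Rightarrow> 'a set \<Rightarrow> bool" where
  "proper_basis m pl st H \<longleftrightarrow>
     atomic m pl st H \<and> proper m pl st H \<and>
     (\<forall>x. \<exists>hs. hs \<noteq> [] \<and> set hs \<subseteq> H \<and> lprod m hs = x) \<and>
     (\<forall>x. \<exists>!hs. canonical_form m pl st H hs \<and> lprod m hs = x)"

definition qclass :: "('a \<times> 'a) set \<Rightarrow> 'a \<Rightarrow> 'a set" where
  "qclass R x = R `` {x}"

definition qmul :: "('a \<Rightarrow> 'a \<Rightarrow> 'a) \<Rightarrow> ('a \<times> 'a) set \<Rightarrow> 'a set \<Rightarrow> 'a set \<Rightarrow> 'a set" where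
  "qmul m R A B = qclass R (m (SOME a. a \<in> A) (SOME b. b \<in> B))"

definition partial_action ::
  "'t set \<Rightarrow> ('t \<Rightarrow> 't \<Rightarrow> 't) \<Rightarrow> 't \<Rightarrow> 'x set \<Rightarrow> ('t \<Rightarrow> 'x \<Rightarrow> 'x option) \<Rightarrow> bool" where
  "partial_action T tm tone X act \<longleftrightarrow>
     (\<forall>t\<in>T. \<forall>x\<in>X. \<forall>y. act t x = Some y \<longrightarrow> y \<in> X) \<and>
     (\<forall>x\<in>X. act tone x = Some x) \<and>
     (\<forall>s\<in>T. \<forall>t\<in>T. \<forall>x\<in>X. \<forall>y z. act t x = Some y \<longrightarrow> act s y = Some z \<longrightarrow>
         act (tm s t) x = Some z)"

definition strong_partial_action ::
  "'t set \<Rightarrow> ('t \<Rightarrow> 't \<Rightarrow> 't) \<Rightarrow> 't \<Rightarrow> 'x set \<Rightarrow> ('t \<Rightarrow> 'x \<Rightarrow> 'x option) \<Rightarrow> bool" where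
  "strong_partial_action T tm tone X act \<longleftrightarrow>
     (\<forall>s\<in>T. \<forall>t\<in>T. \<forall>x\<in>X. \<forall>y. act t x = Some y \<longrightarrow> act (tm s t) x \<noteq> None \<longrightarrow>
         act s y \<noteq> None)"

definition order_preserving_action ::
  "'t set \<Rightarrow> 'x set \<Rightarrow> ('x \<Rightarrow> 'x \<Rightarrow> bool) \<Rightarrow> ('t \<Rightarrow> 'x \<Rightarrow> 'x option) \<Rightarrow> bool" where
  "order_preserving_action T X le act \<longleftrightarrow>
     (\<forall>t\<in>T. \<forall>x\<in>X. \<forall>y\<in>X. \<forall>v. le x y \<longrightarrow> act t y = Some v \<longrightarrow>
         (\<exists>u. act t x = Some u \<and> le u v))"

definition proj_act ::
  "('a \<Rightarrow> 'a \<Rightarrow> 'a) \<Rightarrow> ('a \<Rightarrow> 'a) \<Rightarrow> ('a \<Rightarrow> 'a) \<Rightarrow> 'a set \<Rightarrow> 'a set \<Rightarrow> 'a \<Rightarrow> 'a option" where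
  "proj_act m pl st H X e =
     (if e \<in> projs pl \<and> (\<exists>h\<in>H. h \<in> X \<and> ple m e (st h))
      then Some (pl (m (SOME h. h \<in> H \<and> h \<in> X \<and> ple m e (st h)) e))
      else None)"

end

theory Submission
  imports Defs
begin

lemma sigma_iff: "(x, y) \<in> sigma m pl \<longleftrightarrow>
  (\<forall>R. monoid_congruence m R \<and> projs pl \<times> projs pl \<subseteq> R \<longrightarrow> (x, y) \<in> R)"
  unfolding sigma_def by blast

lemma mc_refl: "monoid_congruence m R \<Longrightarrow> (x, x) \<in> R"
  unfolding monoid_congruence_def equiv_def refl_on_def by blast
lemma mc_sym: "monoid_congruence m R \<Longrightarrow> (x, y) \<in> R \<Longrightarrow> (y, x) \<in> R"
  unfolding monoid_congruence_def equiv_def sym_def by blast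
lemma mc_trans: "monoid_congruence m R \<Longrightarrow> (x, y) \<in> R \<Longrightarrow> (y, z) \<in> R \<Longrightarrow> (x, z) \<in> R"
  unfolding monoid_congruence_def equiv_def trans_def by blast
lemma mc_mul: "monoid_congruence m R \<Longrightarrow> (a, b) \<in> R \<Longrightarrow> (c, d) \<in> R \<Longrightarrow> (m a c, m b d) \<in> R"
  unfolding monoid_congruence_def by blast

lemma sigma_mc: "monoid_congruence m (sigma m pl)"
proof -
  have r: "(x, x) \<in> sigma m pl" for x using mc_refl by (auto simp: sigma_iff)
  have s: "(y, x) \<in> sigma m pl" if h: "(x, y) \<in> sigma m pl" for x y
    unfolding sigma_iff
  proof (intro allI impI)
    fix R assume R: "monoid_congruence m R \<and> projs pl \<times> projs pl \<subseteq> R"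
    then have "(x, y) \<in> R" using h unfolding sigma_iff by blast
    then show "(y, x) \<in> R" using R mc_sym by metis
  qed
  have t: "(x, z) \<in> sigma m pl" if h: "(x, y) \<in> sigma m pl" "(y, z) \<in> sigma m pl" for x y z
    unfolding sigma_iff
  proof (intro allI impI)
    fix R assume R: "monoid_congruence m R \<and> projs pl \<times> projs pl \<subseteq> R"
    then have "(x, y) \<in> R" "(y, z) \<in> R" using h unfolding sigma_iff by blast+
    then show "(x, z) \<in> R" using R mc_trans by metis
  qed
  have c: "(m a c, m b d) \<in> sigma m pl" if h: "(a, b) \<in> sigma m pl" "(c, d) \<in> sigma m pl" for a b c d
    unfolding sigma_iff
  proof (intro allI impI)
    fix R assume R: "monoid_congruence m R \<and> projs pl \<times> projs pl \<subseteq> R"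
    then have "(a, b) \<in> R" "(c, d) \<in> R" using h unfolding sigma_iff by blast+
    then show "(m a c, m b d) \<in> R" using R mc_mul by metis
  qed
  have "equiv UNIV (sigma m pl)"
    by (rule equivI) (auto intro: refl_onI symI transI r s t)
  then show ?thesis unfolding monoid_congruence_def using c by blast
qed

lemma sigma_E: "e \<in> projs pl \<Longrightarrow> f \<in> projs pl \<Longrightarrow> (e, f) \<in> sigma m pl"
  by (auto simp: sigma_iff)

lemma sigma_equiv: "equiv UNIV (sigma m pl)"
  using sigma_mc unfolding monoid_congruence_def by blast

locale sle =
  fixes m :: "'a \<Rightarrow> 'a \<Rightarrow> 'a" and one :: 'a and pl st :: "'a \<Rightarrow> 'a" and H :: "'a set"
  assumes A: "star_left_ehresmann m one pl st"
    and B: "proper_basis m pl st H"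
begin

abbreviation "S \<equiv> sigma m pl"
abbreviation "E \<equiv> projs pl"

lemma assoc: "m (m x y) z = m x (m y z)" using A unfolding star_left_ehresmann_def by blast
lemma lone: "m one x = x" using A unfolding star_left_ehresmann_def by blast
lemma rone: "m x one = x" using A unfolding star_left_ehresmann_def by blast
lemma plx: "m (pl x) x = x" using A unfolding star_left_ehresmann_def by blast
lemma plpl: "pl (m (pl x) (pl y)) = m (pl x) (pl y)" using A unfolding star_left_ehresmann_def by blast
lemma plcomm: "m (pl x) (pl y) = m (pl y) (pl x)" using A unfolding star_left_ehresmann_def by blast
lemma plmul: "pl (m x y) = pl (m x (pl y))" using A unfolding star_left_ehresmann_def by blast
lemma stpl: "pl (st x) = st x" using A unfolding star_left_ehresmann_def by blast
lemma plst: "st (pl x) = pl x" using A unfolding star_left_ehresmann_def by blast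

lemma E_iff: "e \<in> E \<longleftrightarrow> pl e = e"
proof
  assume "e \<in> E" then obtain x where "e = pl x" unfolding projs_def by blast
  then show "pl e = e" by (metis plst stpl)
qed (metis projs_def rangeI)

lemma E_st: "e \<in> E \<Longrightarrow> st e = e" by (metis E_iff plst)
lemma st_E: "st x \<in> E" by (metis E_iff stpl)
lemma pl_E: "pl x \<in> E" by (simp add: projs_def)
lemma E_mul: "e \<in> E \<Longrightarrow> f \<in> E \<Longrightarrow> m e f \<in> E" by (metis E_iff plpl)
lemma E_comm: "e \<in> E \<Longrightarrow> f \<in> E \<Longrightarrow> m e f = m f e" by (metis E_iff plcomm)
lemma E_idem: "e \<in> E \<Longrightarrow> m e e = e" by (metis E_iff plx)
lemma one_E: "one \<in> E" by (metis E_iff plx rone)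

lemma ple_le: "e \<in> E \<Longrightarrow> f \<in> E \<Longrightarrow> ple m e f \<Longrightarrow> m f e = e"
  by (metis E_comm ple_def)

lemma plus_mul_le: "ple m (pl (m a b)) (pl a)"
proof -
  have "pl (m a b) = pl (m (pl a) (m a b))" by (simp add: plx flip: assoc)
  also have "\<dots> = m (pl a) (pl (m a b))" by (metis plmul plpl)
  finally show ?thesis unfolding ple_def by (metis plcomm)
qed

lemma H1: "E \<subseteq> H" using B unfolding proper_basis_def atomic_def by blast
lemma H2: "h \<in> H \<Longrightarrow> e \<in> E \<Longrightarrow> m h e \<in> H \<and> st (m h e) = m (st h) e"
  using B unfolding proper_basis_def atomic_def by blast
lemma H3: "h \<in> H \<Longrightarrow> k \<in> H \<Longrightarrow> k \<notin> E \<Longrightarrow> ple m (pl k) (st h) \<Longrightarrow> m h k \<in> H \<and> st (m h k) = st k"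
  using B unfolding proper_basis_def atomic_def by blast
lemma H4: "\<exists>h\<in>H. (x, h) \<in> S"
  using B unfolding proper_basis_def atomic_def by blast
lemma H5: "h \<in> H \<Longrightarrow> k \<in> H \<Longrightarrow> w \<in> H \<Longrightarrow> (m h k, w) \<in> S \<Longrightarrow> st k = st w \<Longrightarrow>
   \<exists>u\<in>H. (u, h) \<in> S \<and> ple m (pl k) (st u)"
  using B unfolding proper_basis_def atomic_def by blast
lemma properH: "h \<in> H \<Longrightarrow> k \<in> H \<Longrightarrow> st h = st k \<Longrightarrow> (h, k) \<in> S \<Longrightarrow> h = k"
  using B unfolding proper_basis_def proper_def by blast

lemma Srefl: "(x, x) \<in> S" using sigma_mc mc_refl by metis
lemma Ssym: "(x, y) \<in> S \<Longrightarrow> (y, x) \<in> S" using sigma_mc mc_sym by metis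
lemma Strans: "(x, y) \<in> S \<Longrightarrow> (y, z) \<in> S \<Longrightarrow> (x, z) \<in> S" using sigma_mc mc_trans by metis
lemma Smul: "(a, b) \<in> S \<Longrightarrow> (c, d) \<in> S \<Longrightarrow> (m a c, m b d) \<in> S" using sigma_mc mc_mul by metis
lemma SE1: "e \<in> E \<Longrightarrow> (x, m x e) \<in> S"
  using Smul[OF Srefl[of x] sigma_E[OF one_E, of e]] by (simp add: rone)

lemma st_he: "h \<in> H \<Longrightarrow> e \<in> E \<Longrightarrow> ple m e (st h) \<Longrightarrow> st (m h e) = e"
  by (metis H2 st_E ple_le)

lemma partA: "h \<in> H \<Longrightarrow> k \<in> H \<Longrightarrow> e \<in> E \<Longrightarrow> (h, k) \<in> S \<Longrightarrow> ple m e (st h) \<Longrightarrow> ple m e (st k)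
   \<Longrightarrow> m h e = m k e"
proof -
  assume a: "h \<in> H" "k \<in> H" "e \<in> E" "(h, k) \<in> S" "ple m e (st h)" "ple m e (st k)"
  have s1: "(m h e, m k e) \<in> S" using Smul[OF a(4) Srefl] .
  have s2: "st (m h e) = st (m k e)" using st_he[OF a(1,3,5)] st_he[OF a(2,3,6)] by simp
  have s3: "m h e \<in> H" "m k e \<in> H" using H2[OF a(1,3)] H2[OF a(2,3)] by simp_all
  show "m h e = m k e" using properH[OF s3 s2 s1] .
qed

lemma act_eq: "h \<in> H \<Longrightarrow> (t, h) \<in> S \<Longrightarrow> e \<in> E \<Longrightarrow> ple m e (st h) \<Longrightarrow>
  proj_act m pl st H (S``{t}) e = Some (pl (m h e))"
proof -
  assume a: "h \<in> H" "(t, h) \<in> S" "e \<in> E" "ple m e (st h)"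
  define P where "P = (\<lambda>h. h \<in> H \<and> h \<in> S``{t} \<and> ple m e (st h))"
  define h' where "h' = (SOME h. P h)"
  have ex: "\<exists>h\<in>H. h \<in> S``{t} \<and> ple m e (st h)" using a by blast
  have "P h" using a unfolding P_def by blast
  hence "P h'" unfolding h'_def by (rule someI)
  hence b: "h' \<in> H" "(t, h') \<in> S" "ple m e (st h')" unfolding P_def by auto
  have "(h', h) \<in> S" using Strans[OF Ssym[OF b(2)] a(2)] .
  hence "m h' e = m h e" using partA[OF b(1) a(1) a(3) _ b(3) a(4)] by simp
  moreover have "proj_act m pl st H (S``{t}) e = Some (pl (m h' e))"
    unfolding proj_act_def h'_def P_def using a(3) ex by simp
  ultimately show ?thesis by simp
qed

lemma act_Some: "proj_act m pl st H X e = Some y \<Longrightarrow>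
  e \<in> E \<and> (\<exists>h\<in>H. h \<in> X \<and> ple m e (st h) \<and> y = pl (m h e))"
proof -
  assume a: "proj_act m pl st H X e = Some y"
  define P where "P = (\<lambda>h. h \<in> H \<and> h \<in> X \<and> ple m e (st h))"
  define h' where "h' = (SOME h. P h)"
  have c: "e \<in> E \<and> (\<exists>h\<in>H. h \<in> X \<and> ple m e (st h))"
  proof (rule ccontr)
    assume "\<not> ?thesis"
    then have "proj_act m pl st H X e = None" unfolding proj_act_def by simp
    then show False using a by simp
  qed
  then obtain h where "P h" unfolding P_def by blast
  hence hp: "P h'" unfolding h'_def by (rule someI)
  have "proj_act m pl st H X e = Some (pl (m h' e))"
    unfolding proj_act_def h'_def P_def using c by simp
  hence "y = pl (m h' e)" using a by simp
  then show ?thesis using c hp unfolding P_def by blast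
qed

lemma act_Some': "proj_act m pl st H (S``{t}) e = Some y \<Longrightarrow>
  e \<in> E \<and> (\<exists>h\<in>H. (t, h) \<in> S \<and> ple m e (st h) \<and> y = pl (m h e))"
  using act_Some by blast

lemma act_None: "proj_act m pl st H X e \<noteq> None \<longleftrightarrow>
  e \<in> E \<and> (\<exists>h\<in>H. h \<in> X \<and> ple m e (st h))"
  unfolding proj_act_def by auto

lemma quot_cases: "X \<in> UNIV // S \<Longrightarrow> \<exists>t. X = S``{t}"
  by (auto simp: quotient_def)

lemma qmul_eq: "qmul m S (S``{a}) (S``{b}) = S``{m a b}"
proof -
  have "(SOME x. x \<in> S``{a}) \<in> S``{a}" by (rule someI[of _ a]) (simp add: Srefl)
  moreover have "(SOME x. x \<in> S``{b}) \<in> S``{b}" by (rule someI[of _ b]) (simp add: Srefl)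
  ultimately have "(m a b, m (SOME x. x \<in> S``{a}) (SOME x. x \<in> S``{b})) \<in> S"
    by (simp add: Smul)
  then have "S``{m a b} = S``{m (SOME x. x \<in> S``{a}) (SOME x. x \<in> S``{b})}"
    by (rule equiv_class_eq[OF sigma_equiv])
  then show ?thesis unfolding qmul_def qclass_def by simp
qed


lemma pl_of_E: "e \<in> E \<Longrightarrow> pl e = e" using E_iff by blast

lemma compose:
  assumes s: "s = S``{a}" and t: "t = S``{b}" and x: "x \<in> E"
    and ty: "proj_act m pl st H t x = Some y" and sz: "proj_act m pl st H s y = Some z"
  shows "proj_act m pl st H (qmul m S s t) x = Some z"
proof -
  obtain k where k: "k \<in> H" "(b, k) \<in> S" "ple m x (st k)" "y = pl (m k x)"
    using act_Some'[OF ty[unfolded t]] by blast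
  obtain h where h: "h \<in> H" "(a, h) \<in> S" "ple m y (st h)" "z = pl (m h y)" and yE: "y \<in> E"
    using act_Some'[OF sz[unfolded s]] by blast
  have q: "qmul m S s t = S``{m a b}" using s t qmul_eq by simp
  have ab: "(m a b, m h k) \<in> S" using Smul[OF h(2) k(2)] .
  have kx: "m k x \<in> H" "st (m k x) = x"
    using H2[OF k(1) x] st_he[OF k(1) x k(3)] by auto
  have xx: "m x x = x" using E_idem[OF x] .
  show ?thesis
  proof (cases "m k x \<in> E")
    case False
    have le: "ple m (pl (m k x)) (st h)" using h(3) k(4) by simp
    have u: "m h (m k x) \<in> H" "st (m h (m k x)) = x"
      using H3[OF h(1) kx(1) False le] kx(2) by auto
    have "(m h k, m (m h k) x) \<in> S" using SE1[OF x] .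
    hence "(m a b, m h (m k x)) \<in> S" using Strans[OF ab] by (simp add: assoc)
    moreover have "ple m x (st (m h (m k x)))" using u(2) xx unfolding ple_def by simp
    ultimately have "proj_act m pl st H (S``{m a b}) x = Some (pl (m (m h (m k x)) x))"
      using act_eq[OF u(1) _ x] by blast
    moreover have "pl (m (m h (m k x)) x) = z"
      using h(4) k(4) xx by (simp add: assoc plmul[symmetric])
    ultimately show ?thesis using q by simp
  next
    case True
    have kxx: "m k x = x" using kx(2) E_st[OF True] by simp
    have yx: "y = x" using k(4) kxx pl_of_E[OF x] by simp
    have u: "m h x \<in> H" "st (m h x) = x"
      using H2[OF h(1) x] st_he[OF h(1) x] h(3) yx by auto
    have "(k, m k x) \<in> S" using SE1[OF x] .
    hence "(m h k, m h x) \<in> S" using Smul[OF Srefl[of h]] kxx by simp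
    hence "(m a b, m h x) \<in> S" using Strans[OF ab] by blast
    moreover have "ple m x (st (m h x))" using u(2) xx unfolding ple_def by simp
    ultimately have "proj_act m pl st H (S``{m a b}) x = Some (pl (m (m h x) x))"
      using act_eq[OF u(1) _ x] by blast
    moreover have "pl (m (m h x) x) = z"
      using h(4) yx xx by (simp add: assoc)
    ultimately show ?thesis using q by simp
  qed
qed

lemma strong:
  assumes s: "s = S``{a}" and t: "t = S``{b}" and x: "x \<in> E"
    and ty: "proj_act m pl st H t x = Some y" and st': "proj_act m pl st H (qmul m S s t) x \<noteq> None"
  shows "proj_act m pl st H s y \<noteq> None"
proof -
  obtain k where k: "k \<in> H" "(b, k) \<in> S" "ple m x (st k)" "y = pl (m k x)"
    using act_Some'[OF ty[unfolded t]] by blast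
  have q: "qmul m S s t = S``{m a b}" using s t qmul_eq by simp
  obtain u where u: "u \<in> H" "(m a b, u) \<in> S" "ple m x (st u)"
    using st'[unfolded q act_None] by blast
  obtain h0 where h0: "h0 \<in> H" "(a, h0) \<in> S" using H4 by blast
  have kx: "m k x \<in> H" "st (m k x) = x"
    using H2[OF k(1) x] st_he[OF k(1) x k(3)] by auto
  have ux: "m u x \<in> H" "st (m u x) = x"
    using H2[OF u(1) x] st_he[OF u(1) x u(3)] by auto
  have "(m h0 k, m a b) \<in> S" using Smul[OF Ssym[OF h0(2)] Ssym[OF k(2)]] .
  hence "(m h0 k, u) \<in> S" using Strans[OF _ u(2)] by blast
  hence "(m (m h0 k) x, m u x) \<in> S" using Smul[OF _ Srefl[of x]] by blast
  hence "(m h0 (m k x), m u x) \<in> S" by (simp add: assoc)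
  then obtain u' where u': "u' \<in> H" "(u', h0) \<in> S" "ple m (pl (m k x)) (st u')"
    using H5[OF h0(1) kx(1) ux(1)] kx(2) ux(2) by auto
  have "(a, u') \<in> S" using Strans[OF h0(2) Ssym[OF u'(2)]] .
  moreover have "y \<in> E" using k(4) pl_E by simp
  ultimately show ?thesis unfolding s act_None using u' k(4) by auto
qed

lemma orderp:
  assumes t: "t = S``{b}" and x: "x \<in> E" and y: "y \<in> E" and le: "ple m x y"
    and tv: "proj_act m pl st H t y = Some v"
  shows "\<exists>u. proj_act m pl st H t x = Some u \<and> ple m u v"
proof -
  obtain k where k: "k \<in> H" "(b, k) \<in> S" "ple m y (st k)" "v = pl (m k y)"
    using act_Some'[OF tv[unfolded t]] by blast
  have yk: "m y (st k) = y" using k(3) unfolding ple_def .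
  have xy: "m x y = x" using le unfolding ple_def .
  have "ple m x (st k)" unfolding ple_def using xy yk by (metis assoc)
  hence "proj_act m pl st H t x = Some (pl (m k x))" using act_eq[OF k(1) k(2) x] t by simp
  moreover have "m k x = m (m k y) x"
    using xy E_comm[OF x y] by (simp add: assoc)
  hence "ple m (pl (m k x)) v" using plus_mul_le[of "m k y" x] k(4) by simp
  ultimately show ?thesis by blast
qed

lemma main:
  shows "(\<forall>h\<in>H. \<forall>k\<in>H. \<forall>e\<in>projs pl. (h, k) \<in> sigma m pl \<and> ple m e (st h) \<and> ple m e (st k)
            \<longrightarrow> m h e = m k e)
    \<and> partial_action (UNIV // sigma m pl) (qmul m (sigma m pl)) (qclass (sigma m pl) one)
        (projs pl) (proj_act m pl st H)
    \<and> strong_partial_action (UNIV // sigma m pl) (qmul m (sigma m pl)) (qclass (sigma m pl) one)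
        (projs pl) (proj_act m pl st H)
    \<and> order_preserving_action (UNIV // sigma m pl) (projs pl) (ple m) (proj_act m pl st H)
    \<and> (\<forall>t. \<exists>e\<in>projs pl. proj_act m pl st H (qclass (sigma m pl) t) e \<noteq> None)"
proof (intro conjI)
  show "\<forall>h\<in>H. \<forall>k\<in>H. \<forall>e\<in>projs pl. (h, k) \<in> sigma m pl \<and> ple m e (st h) \<and> ple m e (st k)
            \<longrightarrow> m h e = m k e" using partA by blast
  show "partial_action (UNIV // sigma m pl) (qmul m (sigma m pl)) (qclass (sigma m pl) one)
        (projs pl) (proj_act m pl st H)"
    unfolding partial_action_def
  proof (intro conjI ballI allI impI)
    fix t x y assume "proj_act m pl st H t x = Some y"
    then show "y \<in> E" using act_Some pl_E by blast
  next
    fix x assume x: "x \<in> E"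
    have "one \<in> H" using one_E H1 by blast
    moreover have "ple m x (st one)" using E_st[OF one_E] rone unfolding ple_def by simp
    ultimately have "proj_act m pl st H (S``{one}) x = Some (pl (m one x))"
      using act_eq[OF _ Srefl x] by blast
    then show "proj_act m pl st H (qclass S one) x = Some x"
      unfolding qclass_def using lone pl_of_E[OF x] by simp
  next
    fix s t x y z assume "s \<in> UNIV // S" "t \<in> UNIV // S" "x \<in> E"
      "proj_act m pl st H t x = Some y" "proj_act m pl st H s y = Some z"
    moreover obtain a b where "s = S``{a}" "t = S``{b}" using quot_cases \<open>s \<in> UNIV // S\<close> \<open>t \<in> UNIV // S\<close> by blast
    ultimately show "proj_act m pl st H (qmul m S s t) x = Some z"
      using compose by blast
  qed
  show "strong_partial_action (UNIV // sigma m pl) (qmul m (sigma m pl)) (qclass (sigma m pl) one)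
        (projs pl) (proj_act m pl st H)"
    unfolding strong_partial_action_def
  proof (intro ballI allI impI)
    fix s t x y assume "s \<in> UNIV // S" "t \<in> UNIV // S" "x \<in> E"
      "proj_act m pl st H t x = Some y" "proj_act m pl st H (qmul m S s t) x \<noteq> None"
    moreover obtain a b where "s = S``{a}" "t = S``{b}" using quot_cases \<open>s \<in> UNIV // S\<close> \<open>t \<in> UNIV // S\<close> by blast
    ultimately show "proj_act m pl st H s y \<noteq> None"
      using strong by blast
  qed
  show "order_preserving_action (UNIV // sigma m pl) (projs pl) (ple m) (proj_act m pl st H)"
    unfolding order_preserving_action_def
  proof (intro ballI allI impI)
    fix t x y v assume "t \<in> UNIV // S" "x \<in> E" "y \<in> E" "ple m x y"
      "proj_act m pl st H t y = Some v"
    moreover obtain b where "t = S``{b}" using quot_cases \<open>t \<in> UNIV // S\<close> by blast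
    ultimately show "\<exists>u. proj_act m pl st H t x = Some u \<and> ple m u v"
      using orderp by blast
  qed
  show "\<forall>t. \<exists>e\<in>projs pl. proj_act m pl st H (qclass (sigma m pl) t) e \<noteq> None"
  proof
    fix t
    obtain h where h: "h \<in> H" "(t, h) \<in> S" using H4 by blast
    have "ple m (st h) (st h)" unfolding ple_def using E_idem[OF st_E] .
    hence "proj_act m pl st H (S``{t}) (st h) \<noteq> None" using act_eq[OF h st_E] by simp
    then show "\<exists>e\<in>projs pl. proj_act m pl st H (qclass (sigma m pl) t) e \<noteq> None"
      unfolding qclass_def using st_E by blast
  qed
qed
end

theorem mainTheorem19:
  fixes m :: "'a \<Rightarrow> 'a \<Rightarrow> 'a" and one :: 'a and pl st :: "'a \<Rightarrow> 'a" and H :: "'a set"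
  assumes "star_left_ehresmann m one pl st"
    and "proper_basis m pl st H"
  shows "(\<forall>h\<in>H. \<forall>k\<in>H. \<forall>e\<in>projs pl. (h, k) \<in> sigma m pl \<and> ple m e (st h) \<and> ple m e (st k)
            \<longrightarrow> m h e = m k e)
    \<and> partial_action (UNIV // sigma m pl) (qmul m (sigma m pl)) (qclass (sigma m pl) one)
        (projs pl) (proj_act m pl st H)
    \<and> strong_partial_action (UNIV // sigma m pl) (qmul m (sigma m pl)) (qclass (sigma m pl) one)
        (projs pl) (proj_act m pl st H)
    \<and> order_preserving_action (UNIV // sigma m pl) (projs pl) (ple m) (proj_act m pl st H)
    \<and> (\<forall>t. \<exists>e\<in>projs pl. proj_act m pl st H (qclass (sigma m pl) t) e \<noteq> None)"
proof -
  interpret sle m one pl st H using assms by (rule sle.intro)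
  show ?thesis by (rule main)
qed

end
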